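(* Let $q\ge1$ and assume Hypothesis (H$_q$). Then for all $x\in[a,b]$ and $\lambda\in[0,1]$, $$\Big|(1-\lambda)f(mx)+\lambda\frac{(x-a)f(ma)+(b-x)f(mb)}{b-a}-\frac{1}{m(b-a)}\int_{ma}^{mb}f(t)\,dt\Big|\le\frac{mA_1(1,\lambda)^{1-\frac1q}}{b-a}\Big\{(x-a)^2\Big(|f'(mx)|^qA_2(\alpha,1,\lambda)+m|f'(a)|^qA_3(\alpha,1,\lambda)\Big)^{\frac1q}+(b-x)^2\Big(|f'(mx)|^qA_2(\alpha,1,\lambda)+m|f'(b)|^qA_3(\alpha,1,\lambda)\Big)^{\frac1q}\Big\}.$$
   Context: $(\alpha,m)$-convexity: for $(\alpha,m)\in[0,1]\times(0,1]$ and an interval $K\subseteq[0,\infty)$, a function $g:K\to\mathbb{R}$ is $(\alpha,m)$-convex on $K$ if $g(tX+m(1-t)Y)\le t^\alpha g(X)+m(1-t^\alpha)g(Y)$ for all $X,Y\in K$ and $t\in[0,1]$ with $tX+m(1-t)Y\in K$ (convention $0^0=1$). Hypothesis (H$_q$): $I\subseteq[0,\infty)$ is an interval, $f:I\to\mathbb{R}$ is differentiable on the interior $I^\circ$, $m\in(0,1]$, $\alpha\in[0,1]$, $a<b$ with $ma,b\in I^\circ$, $f'$ is Lebesgue integrable on $[ma,mb]$, and $|f'|^q$ is $(\alpha,m)$-convex on $[ma,b]$. Constants: $A_1(\theta,\lambda)=\frac{2\theta\lambda^{1+\frac1\theta}+1}{\theta+1}-\lambda$, $A_2(\alpha,\theta,\lambda)=\frac{2\theta\lambda^{1+\frac{1+\alpha}{\theta}}}{(\alpha+1)(\alpha+\theta+1)}+\frac{1}{\alpha+\theta+1}-\frac{\lambda}{\alpha+1}$,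 $A_3(\alpha,\theta,\lambda)=A_1(\theta,\lambda)-A_2(\alpha,\theta,\lambda)$. *)

theory Defs
  imports "HOL-Analysis.Analysis"
begin

text \<open>Real power with the convention 0^0 = 1 (Isabelle's powr has 0 powr 0 = 0).\<close>
definition pow0 :: "real \<Rightarrow> real \<Rightarrow> real" where
  "pow0 t s = (if t = 0 \<and> s = 0 then 1 else t powr s)"

definition alpha_m_convex_on :: "real \<Rightarrow> real \<Rightarrow> real set \<Rightarrow> (real \<Rightarrow> real) \<Rightarrow> bool" where
  "alpha_m_convex_on \<alpha> m K g \<longleftrightarrow>
     (\<forall>X\<in>K. \<forall>Y\<in>K. \<forall>t\<in>{0..1}. t * X + m * (1 - t) * Y \<in> K \<longrightarrow>
        g (t * X + m * (1 - t) * Y) \<le> pow0 t \<alpha> * g X + m * (1 - pow0 t \<alpha>) * g Y)"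

definition A1 :: "real \<Rightarrow> real \<Rightarrow> real" where
  "A1 \<theta> l = (2 * \<theta> * l powr (1 + 1 / \<theta>) + 1) / (\<theta> + 1) - l"

definition A2 :: "real \<Rightarrow> real \<Rightarrow> real \<Rightarrow> real" where
  "A2 \<alpha> \<theta> l = 2 * \<theta> * l powr (1 + (1 + \<alpha>) / \<theta>) / ((\<alpha> + 1) * (\<alpha> + \<theta> + 1))
      + 1 / (\<alpha> + \<theta> + 1) - l / (\<alpha> + 1)"

definition A3 :: "real \<Rightarrow> real \<Rightarrow> real \<Rightarrow> real" where
  "A3 \<alpha> \<theta> l = A1 \<theta> l - A2 \<alpha> \<theta> l"

end

theory Submission
  imports Defs
begin


definition pp :: "real \<Rightarrow> real \<Rightarrow> real" where
  "pp \<alpha> t = (if \<alpha> = 0 then 1 else t powr \<alpha>)"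

lemma pow0_eq: "0 \<le> t \<Longrightarrow> pow0 t \<alpha> = pp \<alpha> t"
  by (auto simp: pow0_def pp_def)

lemma pp_pos: "0 < t \<Longrightarrow> pp \<alpha> t = t powr \<alpha>"
  by (auto simp: pp_def)

lemma int_A2:
  assumes a: "0 \<le> \<alpha>" and l: "0 \<le> l" "l \<le> 1"
  shows "((\<lambda>t. \<bar>t - l\<bar> * pp \<alpha> t) has_integral A2 \<alpha> 1 l) {0..1}"
proof -
  define G1 where "G1 t = l * t powr (\<alpha>+1)/(\<alpha>+1) - t powr (\<alpha>+2)/(\<alpha>+2)" for t
  define G2 where "G2 t = t powr (\<alpha>+2)/(\<alpha>+2) - l * t powr (\<alpha>+1)/(\<alpha>+1)" for t
  have pa: "t powr (\<alpha>+1) = t * t powr \<alpha>" "t powr (\<alpha>+2) = t * t powr (\<alpha>+1)" if "t > 0" for t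
    using that by (simp_all add: powr_add power2_eq_square)
  have d1: "(G1 has_real_derivative (l * t powr \<alpha> - t powr (\<alpha>+1))) (at t)" if "t>0" for t
  proof -
    have "(G1 has_real_derivative (l * ((\<alpha>+1) * t powr (\<alpha>+1-1))/(\<alpha>+1) - ((\<alpha>+2) * t powr (\<alpha>+2-1))/(\<alpha>+2))) (at t)"
      unfolding G1_def[abs_def]
      using a by (intro derivative_eq_intros has_real_derivative_powr that) auto
    moreover have "l * ((\<alpha>+1) * t powr (\<alpha>+1-1))/(\<alpha>+1) - ((\<alpha>+2) * t powr (\<alpha>+2-1))/(\<alpha>+2) = l * t powr \<alpha> - t powr (\<alpha>+1)"
      using a by (simp add: add_ac)
    ultimately show ?thesis by simp
  qed
  have d2: "(G2 has_real_derivative (t powr (\<alpha>+1) - l * t powr \<alpha>)) (at t)" if "t>0" for t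
  proof -
    have "(G2 has_real_derivative (((\<alpha>+2) * t powr (\<alpha>+2-1))/(\<alpha>+2) - l * ((\<alpha>+1) * t powr (\<alpha>+1-1))/(\<alpha>+1))) (at t)"
      unfolding G2_def[abs_def]
      using a by (intro derivative_eq_intros has_real_derivative_powr that) auto
    moreover have "((\<alpha>+2) * t powr (\<alpha>+2-1))/(\<alpha>+2) - l * ((\<alpha>+1) * t powr (\<alpha>+1-1))/(\<alpha>+1) = t powr (\<alpha>+1) - l * t powr \<alpha>"
      using a by (simp add: add_ac)
    ultimately show ?thesis by simp
  qed
  have c1: "continuous_on S G1" if "S \<subseteq> {0..}" for S
    unfolding G1_def[abs_def] using a that
    by (intro continuous_intros continuous_on_powr') auto
  have c2: "continuous_on S G2" if "S \<subseteq> {0..}" for S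
    unfolding G2_def[abs_def] using a that
    by (intro continuous_intros continuous_on_powr') auto
  have i1: "((\<lambda>t. \<bar>t - l\<bar> * pp \<alpha> t) has_integral (G1 l - G1 0)) {0..l}"
  proof (rule fundamental_theorem_of_calculus_interior[OF l(1) c1[of "{0..l}"]])
    show "{0..l} \<subseteq> {0..}" by auto
    fix t assume t: "t \<in> {0<..<l}"
    have "l * t powr \<alpha> - t powr (\<alpha>+1) = \<bar>t - l\<bar> * pp \<alpha> t"
      using t pa(1)[of t] by (auto simp: pp_pos algebra_simps)
    then show "(G1 has_vector_derivative \<bar>t - l\<bar> * pp \<alpha> t) (at t)"
      using d1[of t] t by (simp add: has_real_derivative_iff_has_vector_derivative)
  qed
  have i2: "((\<lambda>t. \<bar>t - l\<bar> * pp \<alpha> t) has_integral (G2 1 - G2 l)) {l..1}"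
  proof (rule fundamental_theorem_of_calculus_interior[OF l(2) c2[of "{l..1}"]])
    show "{l..1} \<subseteq> {0..}" using l by auto
    fix t assume t: "t \<in> {l<..<1}"
    have "t powr (\<alpha>+1) - l * t powr \<alpha> = \<bar>t - l\<bar> * pp \<alpha> t"
      using t pa(1)[of t] l by (auto simp: pp_pos algebra_simps)
    then show "(G2 has_vector_derivative \<bar>t - l\<bar> * pp \<alpha> t) (at t)"
      using d2[of t] t l by (simp add: has_real_derivative_iff_has_vector_derivative)
  qed
  have i: "((\<lambda>t. \<bar>t - l\<bar> * pp \<alpha> t) has_integral (G1 l - G1 0 + (G2 1 - G2 l))) {0..1}"
    by (rule has_integral_combine[OF l i1 i2])
  have ll: "l * l powr (\<alpha>+1) = l powr (\<alpha>+2)"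
    using pa(2)[of l] l by (cases "l = 0") auto
  have e: "A2 \<alpha> 1 l = 2 * l powr (\<alpha>+2) / ((\<alpha>+1)*(\<alpha>+2)) + 1/(\<alpha>+2) - l/(\<alpha>+1)"
  proof -
    have "1 + (1 + \<alpha>) / 1 = \<alpha> + 2" "\<alpha> + 1 + 1 = \<alpha> + 2" by simp_all
    then show ?thesis unfolding A2_def by (simp add: add.commute)
  qed
  have g: "G1 l = l powr (\<alpha>+2)/(\<alpha>+1) - l powr (\<alpha>+2)/(\<alpha>+2)" "G1 0 = 0"
     "G2 1 = 1/(\<alpha>+2) - l/(\<alpha>+1)" "G2 l = l powr (\<alpha>+2)/(\<alpha>+2) - l powr (\<alpha>+2)/(\<alpha>+1)"
    unfolding G1_def G2_def using a by (simp_all add: ll)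
  have "G1 l - G1 0 + (G2 1 - G2 l) = A2 \<alpha> 1 l"
  proof -
    have p1: "\<alpha>+1 > 0" "\<alpha>+2>0" using a by auto
    have "l powr (\<alpha>+2)/(\<alpha>+1) - l powr (\<alpha>+2)/(\<alpha>+2) = l powr (\<alpha>+2) / ((\<alpha>+1)*(\<alpha>+2))"
      using p1 by (simp add: field_simps)
    then show ?thesis unfolding g e by simp
  qed
  with i show ?thesis by simp
qed



lemma tangent_powr:
  fixes s c r :: real
  assumes s: "0 \<le> s" and c: "0 < c" and r: "0 < r" "r \<le> 1"
  shows "s powr r \<le> c powr (r-1) * (r * s + (1-r) * c)"
proof (cases "s = 0")
  case True
  then show ?thesis using c r by auto
next
  case False
  then have sp: "s > 0" using s by auto
  have y: "s powr r * c powr (1-r) \<le> r * s + (1-r) * c"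
    using Youngs_inequality_0[of r "1-r" s c] sp c r by auto
  have "s powr r = (s powr r * c powr (1-r)) * c powr (r-1)"
    using c by (simp add: mult.assoc flip: powr_add)
  also have "\<dots> \<le> (r * s + (1-r) * c) * c powr (r-1)"
    using y by (intro mult_right_mono) auto
  finally show ?thesis by (simp add: mult.commute)
qed

lemma wjensen:
  fixes w h :: "real \<Rightarrow> real"
  assumes w: "(w has_integral W) S" and wh: "((\<lambda>t. w t * h t) has_integral P) S"
    and ip: "(\<lambda>t. w t * h t powr r) integrable_on S"
    and nn: "\<And>t. t \<in> S \<Longrightarrow> 0 \<le> w t \<and> 0 \<le> h t"
    and r: "0 < r" "r \<le> 1" and W: "0 < W"
  shows "integral S (\<lambda>t. w t * h t powr r) \<le> W powr (1-r) * P powr r"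
proof -
  have P0: "0 \<le> P"
    using has_integral_nonneg[OF wh] nn by auto
  have key: "integral S (\<lambda>t. w t * h t powr r) \<le> c powr (r-1) * r * P + c powr (r-1) * (1-r) * c * W"
    if c: "c > 0" for c
  proof -
    have g: "((\<lambda>t. c powr (r-1) * r * (w t * h t) + c powr (r-1) * (1-r) * c * w t) has_integral
        (c powr (r-1) * r * P + c powr (r-1) * (1-r) * c * W)) S"
      by (intro has_integral_add has_integral_mult_right wh w)
    show ?thesis
    proof (rule has_integral_le[OF integrable_integral[OF ip] g])
      fix t assume t: "t \<in> S"
      have "h t powr r \<le> c powr (r-1) * (r * h t + (1-r) * c)"
        using tangent_powr[of "h t" c r] nn[OF t] c r by auto
      then have "w t * h t powr r \<le> w t * (c powr (r-1) * (r * h t + (1-r) * c))"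
        using nn[OF t] by (intro mult_left_mono) auto
      then show "w t * h t powr r \<le> c powr (r-1) * r * (w t * h t) + c powr (r-1) * (1-r) * c * w t"
        by (simp add: algebra_simps)
    qed
  qed
  show ?thesis
  proof (cases "P = 0")
    case False
    then have Pp: "P > 0" using P0 by auto
    define c where "c = P / W"
    have cp: "c > 0" using Pp W by (simp add: c_def)
    have "c powr (r-1) * r * P + c powr (r-1) * (1-r) * c * W = c powr (r-1) * P"
      using W by (simp add: c_def algebra_simps)
    also have "\<dots> = W powr (1-r) * P powr r"
      using Pp W by (simp add: c_def powr_diff powr_divide field_simps)
    finally show ?thesis using key[OF cp] by simp
  next
    case True
    show ?thesis
    proof (rule ccontr)
      define L where "L = integral S (\<lambda>t. w t * h t powr r)"
      assume "\<not> ?thesis"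
      then have Lp: "L > 0" using True r by (simp add: L_def)
      define c where "c = (L/(2*W)) powr (1/r)"
      have cp: "c > 0" using Lp W by (simp add: c_def)
      have cr: "c powr r = L/(2*W)" using Lp W r by (simp add: c_def powr_powr)
      have "L \<le> c powr (r-1) * (1-r) * c * W" using key[OF cp] True by (simp add: L_def)
      also have "c powr (r-1) * (1-r) * c * W = (1-r) * W * (c powr (r-1) * c)"
        by (simp add: algebra_simps)
      also have "\<dots> = (1-r) * W * (L/(2*W))" using cp cr by (simp add: powr_diff)
      also have "\<dots> = (1-r) * L / 2" using W by simp
      finally show False using Lp r by simp
    qed
  qed
qed



lemma pp_cont: "0 \<le> \<alpha> \<Longrightarrow> continuous_on {0..1} (pp \<alpha>)"
proof (cases "\<alpha> = 0")
  case True then show ?thesis by (simp add: pp_def)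
next
  case False
  assume "0 \<le> \<alpha>"
  then have "\<alpha> > 0" using False by auto
  then have "continuous_on {0..1} (\<lambda>t::real. t powr \<alpha>)"
    by (intro continuous_on_powr' continuous_intros) auto
  then show ?thesis using False by (simp add: pp_def[abs_def])
qed

lemma pp_range: "0 \<le> \<alpha> \<Longrightarrow> t \<in> {0..1} \<Longrightarrow> 0 \<le> pp \<alpha> t \<and> pp \<alpha> t \<le> 1"
  using powr_mono2[of \<alpha> t 1] by (auto simp: pp_def)

lemma A1_A2: "A2 0 1 l = A1 1 l"
  unfolding A1_def A2_def by (simp add: add_divide_distrib)

lemma A1_pos: "0 \<le> l \<Longrightarrow> A1 1 l > 0"
proof -
  assume l: "0 \<le> l"
  have "l powr (1 + 1/1) = l^2"
    using l by (cases "l = 0") (auto simp: powr_numeral)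
  then have "A1 1 l = (l - 1/2)^2 + 1/4"
    unfolding A1_def by (simp add: power2_eq_square algebra_simps)
  moreover have "(l - 1/2)^2 \<ge> 0" by simp
  ultimately show ?thesis by linarith
qed

lemma piece_bound:
  fixes A B m \<alpha> l q :: real
  assumes AB: "0 \<le> A" "0 \<le> B" and m: "0 < m" and \<alpha>: "0 \<le> \<alpha>" "\<alpha> \<le> 1"
    and l: "0 \<le> l" "l \<le> 1" and q: "q \<ge> 1"
  shows "(\<lambda>t. \<bar>t-l\<bar> * (pow0 t \<alpha> * A + m*(1 - pow0 t \<alpha>)*B) powr (1/q)) integrable_on {0..1} \<and>
    integral {0..1} (\<lambda>t. \<bar>t-l\<bar> * (pow0 t \<alpha> * A + m*(1 - pow0 t \<alpha>)*B) powr (1/q))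
      \<le> A1 1 l powr (1-1/q) * (A * A2 \<alpha> 1 l + m * B * A3 \<alpha> 1 l) powr (1/q)"
proof -
  define h where "h t = pp \<alpha> t * A + m*(1 - pp \<alpha> t)*B" for t
  have eq: "\<And>t. t \<in> {0..1} \<Longrightarrow> \<bar>t-l\<bar> * (pow0 t \<alpha> * A + m*(1 - pow0 t \<alpha>)*B) powr (1/q)
      = \<bar>t-l\<bar> * h t powr (1/q)"
    by (simp add: h_def pow0_eq)
  have hnn: "0 \<le> h t" if "t \<in> {0..1}" for t
  proof -
    have p: "0 \<le> pp \<alpha> t" "0 \<le> 1 - pp \<alpha> t" using pp_range[OF \<alpha>(1) that] by auto
    have "0 \<le> pp \<alpha> t * A" using p AB by (intro mult_nonneg_nonneg)
    moreover have "0 \<le> m * (1 - pp \<alpha> t) * B" using p AB m by (intro mult_nonneg_nonneg) auto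
    ultimately show ?thesis unfolding h_def by linarith
  qed
  have W: "((\<lambda>t. \<bar>t-l\<bar>) has_integral A1 1 l) {0..1}"
    using int_A2[of 0 l] l by (simp add: pp_def A1_A2)
  have P: "((\<lambda>t. \<bar>t-l\<bar> * pp \<alpha> t) has_integral A2 \<alpha> 1 l) {0..1}"
    using int_A2[of \<alpha> l] l \<alpha> by simp
  have wh0: "((\<lambda>t. A * (\<bar>t-l\<bar> * pp \<alpha> t) + m * B * (\<bar>t-l\<bar> - \<bar>t-l\<bar> * pp \<alpha> t)) has_integral
      (A * A2 \<alpha> 1 l + m * B * (A1 1 l - A2 \<alpha> 1 l))) {0..1}"
    by (intro has_integral_add has_integral_mult_right has_integral_diff W P)
  have wh: "((\<lambda>t. \<bar>t-l\<bar> * h t) has_integral (A * A2 \<alpha> 1 l + m * B * A3 \<alpha> 1 l)) {0..1}"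
    using wh0 unfolding A3_def h_def by (simp add: algebra_simps)
  have cont: "continuous_on {0..1} (\<lambda>t. \<bar>t-l\<bar> * h t powr (1/q))"
  proof -
    have c1: "continuous_on {0..1} h"
      unfolding h_def[abs_def] by (intro continuous_intros pp_cont[OF \<alpha>(1)])
    have c2: "continuous_on {0..1} (\<lambda>t. h t powr (1/q))"
      by (rule continuous_on_powr'[OF c1 continuous_on_const]) (use hnn q in auto)
    show ?thesis by (intro continuous_intros c2)
  qed
  have ip: "(\<lambda>t. \<bar>t-l\<bar> * h t powr (1/q)) integrable_on {0..1}"
    by (rule integrable_continuous_interval[OF cont])
  have J: "integral {0..1} (\<lambda>t. \<bar>t-l\<bar> * h t powr (1/q))
      \<le> A1 1 l powr (1-1/q) * (A * A2 \<alpha> 1 l + m * B * A3 \<alpha> 1 l) powr (1/q)"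
    by (rule wjensen[OF W wh ip]) (use hnn q A1_pos l in auto)
  have "(\<lambda>t. \<bar>t-l\<bar> * (pow0 t \<alpha> * A + m*(1 - pow0 t \<alpha>)*B) powr (1/q)) integrable_on {0..1}"
    by (rule integrable_eq[OF ip]) (simp add: eq)
  moreover have "integral {0..1} (\<lambda>t. \<bar>t-l\<bar> * (pow0 t \<alpha> * A + m*(1 - pow0 t \<alpha>)*B) powr (1/q))
     = integral {0..1} (\<lambda>t. \<bar>t-l\<bar> * h t powr (1/q))"
    by (rule integral_cong) (rule eq)
  ultimately show ?thesis using J by simp
qed



lemma piece_identity:
  fixes f f' F :: "real \<Rightarrow> real" and X Y m l c d :: real
  defines "g \<equiv> (\<lambda>t. t * X + m * (1 - t) * Y)"
  assumes D: "\<And>y. y \<in> {c..d} \<Longrightarrow> (f has_real_derivative f' y) (at y)"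
    and DF: "\<And>u. u \<in> {c..d} \<Longrightarrow> (F has_real_derivative f u) (at u within {c..d})"
    and gr: "\<And>t. t \<in> {0..1} \<Longrightarrow> g t \<in> {c..d}"
  shows "((\<lambda>t. (X - m*Y)^2 * ((t-l) * f' (g t))) has_integral
      ((X - m*Y) * ((1-l) * f (g 1) + l * f (g 0)) - F (g 1) + F (g 0))) {0..1}"
proof -
  define k where "k = X - m*Y"
  define \<Phi> where "\<Phi> t = k * (t - l) * f (g t) - F (g t)" for t
  have dg: "(g has_real_derivative k) (at t within {0..1})" for t
    unfolding g_def k_def by (auto intro!: derivative_eq_intros simp: algebra_simps)
  have d: "(\<Phi> has_real_derivative k^2 * ((t-l) * f' (g t))) (at t within {0..1})"
    if t: "t \<in> {0..1}" for t
  proof -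
    have dfg: "((\<lambda>t. f (g t)) has_real_derivative f' (g t) * k) (at t within {0..1})"
      by (rule DERIV_chain2[OF D[OF gr[OF t]] dg])
    have sub: "g ` {0..1} \<subseteq> {c..d}" using gr by auto
    have dFg0: "(F \<circ> g has_real_derivative f (g t) * k) (at t within {0..1})"
      by (rule DERIV_image_chain[OF DERIV_subset[OF DF[OF gr[OF t]] sub] dg])
    have dFg: "((\<lambda>t. F (g t)) has_real_derivative f (g t) * k) (at t within {0..1})"
      using dFg0 by (simp add: comp_def)
    show ?thesis
      unfolding \<Phi>_def[abs_def]
      apply (rule derivative_eq_intros refl dfg dFg)+
      apply (simp add: power2_eq_square algebra_simps)
      done
  qed
  have "((\<lambda>t. k^2 * ((t-l) * f' (g t))) has_integral (\<Phi> 1 - \<Phi> 0)) {0..1}"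
    by (rule fundamental_theorem_of_calculus)
       (use d in \<open>auto simp: has_real_derivative_iff_has_vector_derivative\<close>)
  moreover have "\<Phi> 1 - \<Phi> 0 = k * ((1-l) * f (g 1) + l * f (g 0)) - F (g 1) + F (g 0)"
    unfolding \<Phi>_def by (simp add: algebra_simps)
  ultimately show ?thesis unfolding k_def by simp
qed

lemma piece_estimate:
  fixes f' g :: "real \<Rightarrow> real"
  assumes hi: "((\<lambda>t. k^2 * ((t-l) * f' (g t))) has_integral K) {0..1}"
    and bd: "\<And>t. t \<in> {0..1} \<Longrightarrow> \<bar>f' (g t)\<bar> \<le> (pow0 t \<alpha> * A + m*(1 - pow0 t \<alpha>)*B) powr (1/q)"
    and AB: "0 \<le> A" "0 \<le> B" and m: "0 < m" and \<alpha>: "0 \<le> \<alpha>" "\<alpha> \<le> 1"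
    and l: "0 \<le> l" "l \<le> 1" and q: "q \<ge> 1"
  shows "\<bar>K\<bar> \<le> k^2 * (A1 1 l powr (1-1/q) * (A * A2 \<alpha> 1 l + m * B * A3 \<alpha> 1 l) powr (1/q))"
proof -
  note pb = piece_bound[OF AB m \<alpha> l q]
  let ?w = "\<lambda>t. \<bar>t-l\<bar> * (pow0 t \<alpha> * A + m*(1 - pow0 t \<alpha>)*B) powr (1/q)"
  have "norm (integral {0..1} (\<lambda>t. k^2 * ((t-l) * f' (g t)))) \<le> integral {0..1} (\<lambda>t. k^2 * ?w t)"
  proof (rule integral_norm_bound_integral)
    show "(\<lambda>t. k^2 * ((t-l) * f' (g t))) integrable_on {0..1}" using hi by blast
    show "(\<lambda>t. k^2 * ?w t) integrable_on {0..1}" using pb by (intro integrable_on_mult_right) auto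
    fix t :: real assume t: "t \<in> {0..1}"
    have "\<bar>t - l\<bar> * \<bar>f' (g t)\<bar> \<le> ?w t"
      by (intro mult_left_mono bd t) auto
    then show "norm (k^2 * ((t-l) * f' (g t))) \<le> k^2 * ?w t"
      by (simp add: abs_mult mult_left_mono)
  qed
  also have "\<dots> = k^2 * integral {0..1} ?w" by simp
  also have "\<dots> \<le> k^2 * (A1 1 l powr (1-1/q) * (A * A2 \<alpha> 1 l + m * B * A3 \<alpha> 1 l) powr (1/q))"
    using pb by (intro mult_left_mono) auto
  finally show ?thesis using integral_unique[OF hi] by simp
qed



theorem mainTheorem3:
  fixes f :: "real \<Rightarrow> real" and I :: "real set"
    and m \<alpha> q a b x lam :: real
  assumes q: "q \<ge> 1"
    and I: "is_interval I" "I \<subseteq> {0..}"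
    and diff: "\<And>y. y \<in> interior I \<Longrightarrow> f differentiable (at y)"
    and m: "0 < m" "m \<le> 1"
    and \<alpha>: "0 \<le> \<alpha>" "\<alpha> \<le> 1"
    and ab: "a < b" "m * a \<in> interior I" "b \<in> interior I"
    and int: "set_integrable lborel {m * a..m * b} (deriv f)"
    and conv: "alpha_m_convex_on \<alpha> m {m * a..b} (\<lambda>y. \<bar>deriv f y\<bar> powr q)"
    and x: "x \<in> {a..b}"
    and hlam: "lam \<in> {0..1}"
  shows "\<bar>(1 - lam) * f (m * x) + lam * ((x - a) * f (m * a) + (b - x) * f (m * b)) / (b - a)
            - 1 / (m * (b - a)) * integral {m * a..m * b} f\<bar>
         \<le> m * A1 1 lam powr (1 - 1 / q) / (b - a) *
            ((x - a)^2 * (\<bar>deriv f (m * x)\<bar> powr q * A2 \<alpha> 1 lam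
                           + m * \<bar>deriv f a\<bar> powr q * A3 \<alpha> 1 lam) powr (1 / q)
           + (b - x)^2 * (\<bar>deriv f (m * x)\<bar> powr q * A2 \<alpha> 1 lam
                           + m * \<bar>deriv f b\<bar> powr q * A3 \<alpha> 1 lam) powr (1 / q))"
proof -
  have a0: "0 \<le> m * a" using ab(2) I(2) interior_subset by blast
  then have a0': "0 \<le> a" using m by (simp add: zero_le_mult_iff)
  have xa: "a \<le> x" "x \<le> b" using x by auto
  have l: "0 \<le> lam" "lam \<le> 1" using hlam by auto
  have ma: "m * a \<le> a" using mult_left_le_one_le[of a m] a0' m by linarith
  have mx: "m * a \<le> m * x" "m * x \<le> m * b" using xa m by auto
  have mb: "m * b \<le> b" using mult_left_le_one_le[of b m] a0' ab(1) m by linarith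
  have mxb: "m * x \<le> b" using mx mb by linarith
  have intI: "is_interval (interior I)"
    using I(1) by (simp add: is_interval_convex_1)
  have sub: "{m*a..b} \<subseteq> interior I"
  proof
    fix y assume y: "y \<in> {m*a..b}"
    show "y \<in> interior I"
      using intI[unfolded is_interval_1, rule_format, OF ab(2) ab(3), of y] y by simp
  qed
  have D: "\<And>y. y \<in> {m*a..m*b} \<Longrightarrow> (f has_real_derivative deriv f y) (at y)"
  proof -
    fix y assume y: "y \<in> {m*a..m*b}"
    then have "y \<in> {m*a..b}" using mb by auto
    then have "y \<in> interior I" using sub by blast
    then show "(f has_real_derivative deriv f y) (at y)"
      using diff DERIV_deriv_iff_real_differentiable by blast
  qed
  have fc: "continuous_on {m*a..m*b} f"
    using D DERIV_isCont by (blast intro: continuous_at_imp_continuous_on)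
  define F where "F u = integral {m*a..u} f" for u
  have DF: "\<And>u. u \<in> {m*a..m*b} \<Longrightarrow> (F has_real_derivative f u) (at u within {m*a..m*b})"
    unfolding F_def has_real_derivative_iff_has_vector_derivative
    by (rule integral_has_vector_derivative[OF fc])
  define g1 where "g1 = (\<lambda>t. t * (m*x) + m * (1 - t) * a)"
  define g2 where "g2 = (\<lambda>t. t * (m*x) + m * (1 - t) * b)"
  have g1r: "g1 t \<in> {m*a..m*x}" if t: "t \<in> {0..1}" for t
  proof -
    have e: "g1 t = m*a + t * (m*(x-a))" "g1 t = m*x - (1-t) * (m*(x-a))"
      unfolding g1_def by (simp_all add: algebra_simps)
    have n: "0 \<le> t * (m*(x-a))" "0 \<le> (1-t) * (m*(x-a))"
      using t m xa by (auto intro!: mult_nonneg_nonneg)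
    have "m*a \<le> g1 t" by (subst e(1)) (simp add: n)
    moreover have "g1 t \<le> m*x" by (subst e(2)) (simp add: n)
    ultimately show ?thesis by simp
  qed
  have g2r: "g2 t \<in> {m*x..m*b}" if t: "t \<in> {0..1}" for t
  proof -
    have e: "g2 t = m*x + (1-t) * (m*(b-x))" "g2 t = m*b - t * (m*(b-x))"
      unfolding g2_def by (simp_all add: algebra_simps)
    have n: "0 \<le> t * (m*(b-x))" "0 \<le> (1-t) * (m*(b-x))"
      using t m xa by (auto intro!: mult_nonneg_nonneg)
    have "m*x \<le> g2 t" by (subst e(1)) (simp add: n)
    moreover have "g2 t \<le> m*b" by (subst e(2)) (simp add: n)
    ultimately show ?thesis by simp
  qed
  have H1: "((\<lambda>t. (m*x - m*a)^2 * ((t-lam) * deriv f (g1 t))) has_integral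
      ((m*x - m*a) * ((1-lam) * f (g1 1) + lam * f (g1 0)) - F (g1 1) + F (g1 0))) {0..1}"
    unfolding g1_def
  proof (rule piece_identity[OF D DF])
    fix t :: real assume "t \<in> {0..1}"
    then have "g1 t \<in> {m*a..m*x}" by (rule g1r)
    then show "t * (m*x) + m * (1 - t) * a \<in> {m*a..m*b}" using mx unfolding g1_def by auto
  qed
  have H2: "((\<lambda>t. (m*x - m*b)^2 * ((t-lam) * deriv f (g2 t))) has_integral
      ((m*x - m*b) * ((1-lam) * f (g2 1) + lam * f (g2 0)) - F (g2 1) + F (g2 0))) {0..1}"
    unfolding g2_def
  proof (rule piece_identity[OF D DF])
    fix t :: real assume "t \<in> {0..1}"
    then have "g2 t \<in> {m*x..m*b}" by (rule g2r)
    then show "t * (m*x) + m * (1 - t) * b \<in> {m*a..m*b}" using mx unfolding g2_def by auto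
  qed
  define K1 where "K1 = (m*x - m*a) * ((1-lam) * f (g1 1) + lam * f (g1 0)) - F (g1 1) + F (g1 0)"
  define K2 where "K2 = (m*x - m*b) * ((1-lam) * f (g2 1) + lam * f (g2 0)) - F (g2 1) + F (g2 0)"
  define A where "A = \<bar>deriv f (m * x)\<bar> powr q"
  define B1 where "B1 = \<bar>deriv f a\<bar> powr q"
  define B2 where "B2 = \<bar>deriv f b\<bar> powr q"
  define R where "R = A1 1 lam powr (1 - 1/q)"
  define C1 where "C1 = (A * A2 \<alpha> 1 lam + m * B1 * A3 \<alpha> 1 lam) powr (1/q)"
  define C2 where "C2 = (A * A2 \<alpha> 1 lam + m * B2 * A3 \<alpha> 1 lam) powr (1/q)"
  have absp: "\<bar>y\<bar> = (\<bar>y\<bar> powr q) powr (1/q)" for y :: real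
    using q by (cases "y = 0") (auto simp: powr_powr)
  have pw: "\<bar>deriv f (t * (m*x) + m * (1 - t) * Y)\<bar> \<le> (pow0 t \<alpha> * A + m*(1 - pow0 t \<alpha>)*(\<bar>deriv f Y\<bar> powr q)) powr (1/q)"
    if t: "t \<in> {0..1}" and Y: "Y \<in> {m*a..b}" and P: "t * (m*x) + m * (1 - t) * Y \<in> {m*a..b}" for t Y
  proof -
    have X: "m*x \<in> {m*a..b}" using mx mxb by auto
    have "\<bar>deriv f (t * (m*x) + m * (1 - t) * Y)\<bar> powr q \<le> pow0 t \<alpha> * A + m*(1 - pow0 t \<alpha>)*(\<bar>deriv f Y\<bar> powr q)"
      using conv X Y t P unfolding alpha_m_convex_on_def A_def by blast
    then have "(\<bar>deriv f (t * (m*x) + m * (1 - t) * Y)\<bar> powr q) powr (1/q) \<le> (pow0 t \<alpha> * A + m*(1 - pow0 t \<alpha>)*(\<bar>deriv f Y\<bar> powr q)) powr (1/q)"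
      using q by (intro powr_mono2) auto
    then show ?thesis using absp by metis
  qed
  have E1: "\<bar>K1\<bar> \<le> (m*x - m*a)^2 * (R * C1)"
    unfolding R_def C1_def K1_def
  proof (rule piece_estimate[where k="m*x - m*a" and f'="deriv f" and g=g1, OF H1 _ _ _ m(1) \<alpha> l q])
    fix t :: real assume t: "t \<in> {0..1}"
    show "\<bar>deriv f (g1 t)\<bar> \<le> (pow0 t \<alpha> * A + m*(1 - pow0 t \<alpha>)*B1) powr (1/q)"
    proof -
      have Ya: "a \<in> {m*a..b}" using ma ab by auto
      have P: "t * (m*x) + m * (1 - t) * a \<in> {m*a..b}" using g1r[OF t] mxb unfolding g1_def by auto
      show ?thesis using pw[OF t Ya P] unfolding g1_def B1_def by simp
    qed
  qed (auto simp: A_def B1_def)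
  have E2: "\<bar>K2\<bar> \<le> (m*x - m*b)^2 * (R * C2)"
    unfolding R_def C2_def K2_def
  proof (rule piece_estimate[where k="m*x - m*b" and f'="deriv f" and g=g2, OF H2 _ _ _ m(1) \<alpha> l q])
    fix t :: real assume t: "t \<in> {0..1}"
    show "\<bar>deriv f (g2 t)\<bar> \<le> (pow0 t \<alpha> * A + m*(1 - pow0 t \<alpha>)*B2) powr (1/q)"
    proof -
      have Yb: "b \<in> {m*a..b}" using ma ab by auto
      have P: "t * (m*x) + m * (1 - t) * b \<in> {m*a..b}" using g2r[OF t] mb mx unfolding g2_def by auto
      show ?thesis using pw[OF t Yb P] unfolding g2_def B2_def by simp
    qed
  qed (auto simp: A_def B2_def)
  have F0: "F (m*a) = 0" by (simp add: F_def)
  define E where "E = (1 - lam) * f (m * x) + lam * ((x - a) * f (m * a) + (b - x) * f (m * b)) / (b - a)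
            - 1 / (m * (b - a)) * integral {m * a..m * b} f"
  have g: "g1 1 = m*x" "g1 0 = m*a" "g2 1 = m*x" "g2 0 = m*b" by (simp_all add: g1_def g2_def)
  have bam: "m * (b - a) > 0" using m ab by simp
  have m0: "m \<noteq> 0" and ba0: "b - a \<noteq> 0" using m ab by auto
  have e1: "lam * ((x - a) * f (m * a) + (b - x) * f (m * b)) / (b - a) * (m * (b - a))
      = m * lam * ((x - a) * f (m * a) + (b - x) * f (m * b))"
    using ba0 by simp
  have e2: "1 / (m * (b - a)) * integral {m * a..m * b} f * (m * (b - a)) = integral {m * a..m * b} f"
    using ba0 m0 by simp
  have EK: "E * (m * (b - a)) = K1 - K2"
  proof -
    have "E * (m * (b - a)) = (1 - lam) * f (m * x) * (m * (b - a))
      + lam * ((x - a) * f (m * a) + (b - x) * f (m * b)) / (b - a) * (m * (b - a))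
      - 1 / (m * (b - a)) * integral {m * a..m * b} f * (m * (b - a))"
      unfolding E_def by (simp add: algebra_simps)
    also have "\<dots> = (1 - lam) * f (m * x) * (m * (b - a)) + m * lam * ((x - a) * f (m * a) + (b - x) * f (m * b))
       - integral {m * a..m * b} f" unfolding e1 e2 ..
    also have "\<dots> = K1 - K2"
      unfolding K1_def K2_def g F0 by (simp add: F_def algebra_simps)
    finally show ?thesis .
  qed
  have sq: "(m*x - m*a)^2 = m * (m * (x-a)^2)" "(m*x - m*b)^2 = m * (m * (b-x)^2)"
    by (simp_all add: power2_eq_square algebra_simps)
  have EE: "E = (K1 - K2) / (m * (b - a))"
  proof -
    have "E = E * (m * (b - a)) / (m * (b - a))" using m0 ba0 by simp
    then show ?thesis unfolding EK .
  qed
  have "\<bar>E\<bar> = \<bar>K1 - K2\<bar> / (m * (b - a))"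
    unfolding EE using bam by (simp add: abs_divide)
  also have "\<dots> \<le> (\<bar>K1\<bar> + \<bar>K2\<bar>) / (m * (b - a))"
    using bam by (intro divide_right_mono) auto
  also have "\<dots> \<le> (m * (m * (x-a)^2) * (R * C1) + m * (m * (b-x)^2) * (R * C2)) / (m * (b - a))"
    using bam E1 E2 sq by (intro divide_right_mono) auto
  also have "\<dots> = (m * (m * R * ((x - a)^2 * C1 + (b - x)^2 * C2))) / (m * (b - a))"
    by (simp add: algebra_simps)
  also have "\<dots> = m * R / (b - a) * ((x - a)^2 * C1 + (b - x)^2 * C2)"
    using m0 by simp
  finally show ?thesis unfolding E_def R_def C1_def C2_def A_def B1_def B2_def .
qed

end
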